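(* Let $m\in\mathbb R$ be the unique minimizing point of $M$ and assume the boundedness condition (B) holds. Then $\hat m_n\to m$ $\mathbb P$-$r$-quickly for every $r>0$, i.e. for every $\epsilon>0$ and $r>0$, $\mathbb E[L_\epsilon^r]<\infty$, where $L_\epsilon:=\sup\{k\in\mathbb N:|\hat m_k-m|>\epsilon\}$ (with $L_\epsilon:=0$ if this set is empty and $L_\epsilon:=\infty$ if it is unbounded).
   Context: Let $(S,\mathcal S,Q)$ be a probability space and $h:S\times\mathbb R\to\mathbb R$ such that $h(\cdot,t)$ is $\mathcal S$-measurable for every $t\in\mathbb R$ and $h(x,\cdot)$ is convex for every $x\in S$. For $f:\mathbb R\to\mathbb R$ convex, $D^+f$ and $D^-f$ denote its right and left derivatives; $D^\pm h(x,t)$ denotes the one-sided derivatives of $h(x,\cdot)$ at $t$. Assume $\int_S|D^+h(x,t)|\,Q(dx)<\infty$ and $\int_S|D^-h(x,t)|\,Q(dx)<\infty$ for all $t\in\mathbb R$. Fix $t_0\in\mathbb R$ and set $M(t):=\int_S (h(x,t)-h(x,t_0))\,Q(dx)$; $M$ is real-valued and convex with $D^\pm M(t)=\int_S D^\pm h(x,t)\,Q(dx)$. Let $X_1,X_2,\dots$ be i.i.d. $S$-valued random variables on a probability space $(\Omega,\mathcal A,\mathbb P)$ with common law $Q$, let $M_n(t):=\frac1n\sum_{i=1}^n (h(X_i,t)-h(X_i,t_0))$, and let $\hat m_n$ be the smallest minimizing point of $M_n$ (assumed to exist; it is a random variable). Boundedness condition (B): for every $x\neq 0$ there are reals $a(x)<b(x)$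 with $a(x)\le D^+h(X_1,m+x)\le b(x)$ almost surely. *)

theory Defs
  imports "HOL-Probability.Probability"
begin

definition Dplus :: "(real \<Rightarrow> real) \<Rightarrow> real \<Rightarrow> real" where
  "Dplus f t = Lim (at_right t) (\<lambda>s. (f s - f t) / (s - t))"

definition Dminus :: "(real \<Rightarrow> real) \<Rightarrow> real \<Rightarrow> real" where
  "Dminus f t = Lim (at_left t) (\<lambda>s. (f s - f t) / (s - t))"

definition Mpop :: "'s measure \<Rightarrow> ('s \<Rightarrow> real \<Rightarrow> real) \<Rightarrow> real \<Rightarrow> real \<Rightarrow> real" where
  "Mpop Q h t0 t = (\<integral>x. h x t - h x t0 \<partial>Q)"

definition Memp :: "('s \<Rightarrow> real \<Rightarrow> real) \<Rightarrow> real \<Rightarrow> (nat \<Rightarrow> 'w \<Rightarrow> 's) \<Rightarrow> nat \<Rightarrow> 'w \<Rightarrow> real \<Rightarrow> real" where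
  "Memp h t0 X n \<omega> t = (1 / real n) * (\<Sum>i<n. h (X i \<omega>) t - h (X i \<omega>) t0)"

definition smallest_minimizer :: "(real \<Rightarrow> real) \<Rightarrow> real \<Rightarrow> bool" where
  "smallest_minimizer f y \<longleftrightarrow> (\<forall>t. f y \<le> f t) \<and> (\<forall>z. (\<forall>t. f z \<le> f t) \<longrightarrow> y \<le> z)"

text \<open>L_eps = sup {k. |mhat_k - m| > eps}, in enat (Sup {} = 0, unbounded = infinity).\<close>
definition last_exit :: "(nat \<Rightarrow> real) \<Rightarrow> real \<Rightarrow> real \<Rightarrow> enat" where
  "last_exit mh m \<epsilon> = Sup {enat k | k. k \<ge> 1 \<and> \<bar>mh k - m\<bar> > \<epsilon>}"

definition enat_powr :: "enat \<Rightarrow> real \<Rightarrow> ennreal" where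
  "enat_powr L r = (case L of enat k \<Rightarrow> ennreal (real k powr r) | \<infinity> \<Rightarrow> \<infinity>)"

end

theory Submission
  imports Defs "HOL-Real_Asymp.Real_Asymp"
begin

lemma slope_mono:
  fixes f :: "real \<Rightarrow> real"
  assumes f: "convex_on UNIV f" and "x < y" "y < z"
  shows "(f y - f x) / (y - x) \<le> (f z - f y) / (z - y)"
proof -
  have "(f x - f y) / (x - y) \<le> (f x - f z) / (x - z)"
       "(f x - f z) / (x - z) \<le> (f y - f z) / (y - z)"
    using convex_on_slope_le[OF f _ _ assms(2,3)] by auto
  then show ?thesis by (smt (verit) minus_divide_divide)
qed

lemma slope_mono2:
  fixes f :: "real \<Rightarrow> real"
  assumes f: "convex_on UNIV f" and "t < u" "u \<le> v"
  shows "(f u - f t) / (u - t) \<le> (f v - f t) / (v - t)"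
proof (cases "u = v")
  case False
  then have "u < v" using assms by simp
  have "(f t - f u) / (t - u) \<le> (f t - f v) / (t - v)"
    using convex_on_slope_le(1)[OF f _ _ assms(2) \<open>u<v\<close>] by auto
  then show ?thesis by (smt (verit) minus_divide_divide)
qed simp

lemma slope_lower:
  fixes f :: "real \<Rightarrow> real"
  assumes f: "convex_on UNIV f" and "s < t" "t < u"
  shows "(f t - f s) / (t - s) \<le> (f u - f t) / (u - t)"
  using slope_mono[OF f assms(2,3)] .

lemma Dplus_Inf:
  fixes f :: "real \<Rightarrow> real"
  assumes f: "convex_on UNIV f"
  shows "Dplus f t = Inf ((\<lambda>s. (f s - f t) / (s - t)) ` {t<..})"
proof -
  define q where "q = (\<lambda>s. (f s - f t) / (s - t))"
  have bdd: "bdd_below (q ` {t<..})"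
    unfolding bdd_below_def q_def
    using slope_lower[OF f, of "t-1" t] by (intro exI[of _ "(f t - f (t-1)) / (t - (t-1))"]) auto
  have ne: "q ` {t<..} \<noteq> {}" by auto
  have lim: "(q \<longlongrightarrow> Inf (q ` {t<..})) (at_right t)"
  proof (rule order_tendstoI)
    fix y assume "y < Inf (q ` {t<..})"
    then show "eventually (\<lambda>s. y < q s) (at_right t)"
    proof -
      have "\<forall>s. t < s \<and> s < t + 1 \<longrightarrow> y < q s"
        using cInf_lower[OF _ bdd] \<open>y < _\<close> by (smt (verit) greaterThan_iff image_eqI)
      then show ?thesis by (subst eventually_at_right[of t "t+1"]) (auto intro!: exI[of _ "t+1"])
    qed
  next
    fix y assume "Inf (q ` {t<..}) < y"
    then obtain u where u: "u > t" "q u < y" using cInf_lessD[OF ne] by auto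
    have "\<forall>s. t < s \<and> s < u \<longrightarrow> y > q s"
      using slope_mono2[OF f] u unfolding q_def by (smt (verit))
    then show "eventually (\<lambda>s. q s < y) (at_right t)"
      unfolding eventually_at_right[OF u(1)] using u(1) by blast
  qed
  show ?thesis unfolding Dplus_def q_def[symmetric]
    by (rule tendsto_Lim[OF _ lim]) simp
qed

lemma Dplus_le_slope:
  fixes f :: "real \<Rightarrow> real"
  assumes f: "convex_on UNIV f" and "t < s"
  shows "Dplus f t \<le> (f s - f t) / (s - t)"
proof -
  have bdd: "bdd_below ((\<lambda>s. (f s - f t) / (s - t)) ` {t<..})"
    unfolding bdd_below_def
    using slope_lower[OF f, of "t-1" t] by (intro exI[of _ "(f t - f (t-1)) / (t - (t-1))"]) auto
  show ?thesis unfolding Dplus_Inf[OF f] using assms by (intro cInf_lower[OF _ bdd]) auto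
qed

lemma slope_le_Dplus:
  fixes f :: "real \<Rightarrow> real"
  assumes f: "convex_on UNIV f" and "s < t"
  shows "(f t - f s) / (t - s) \<le> Dplus f t"
  unfolding Dplus_Inf[OF f] using assms by (intro cInf_greatest) (auto intro!: slope_lower[OF f])

lemma hoeff_bound:
  fixes P :: "'w measure" and Q :: "'s measure" and X :: "nat \<Rightarrow> 'w \<Rightarrow> 's"
  assumes P: "prob_space P"
    and X_meas: "\<And>i. X i \<in> measurable P Q"
    and X_indep: "prob_space.indep_vars P (\<lambda>_. Q) X UNIV"
    and X_law: "\<And>i. distr P Q (X i) = Q"
    and gm: "g \<in> borel_measurable Q"
    and Bd: "AE \<omega> in P. a \<le> g (X 0 \<omega>) \<and> g (X 0 \<omega>) \<le> b" and ab: "a < b" and n: "n \<ge> 1"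
  shows "\<integral>x. g x \<partial>Q > 0 \<Longrightarrow> measure P {\<omega>\<in>space P. (\<Sum>i<n. g (X i \<omega>)) \<le> 0}
           \<le> exp (-2 * real n * (\<integral>x. g x \<partial>Q)\<^sup>2 / (b - a)\<^sup>2)"
    and "\<integral>x. g x \<partial>Q < 0 \<Longrightarrow> measure P {\<omega>\<in>space P. (\<Sum>i<n. g (X i \<omega>)) \<ge> 0}
           \<le> exp (-2 * real n * (\<integral>x. g x \<partial>Q)\<^sup>2 / (b - a)\<^sup>2)"
proof -
  interpret prob_space P by (rule P)
  have gX: "(\<lambda>\<omega>. g (X i \<omega>)) \<in> borel_measurable P" for i
    using measurable_comp[OF X_meas gm] by (simp add: comp_def)
  have dist: "distr P borel (\<lambda>\<omega>. g (X i \<omega>)) = distr Q borel g" for i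
  proof -
    have "distr P borel (\<lambda>\<omega>. g (X i \<omega>)) = distr (distr P Q (X i)) borel g"
      using distr_distr[OF gm X_meas[of i]] by (simp add: comp_def)
    then show ?thesis using X_law by simp
  qed
  interpret H: Hoeffding_ineq_iid P "{..<n}" "\<lambda>i \<omega>. g (X i \<omega>)" "\<lambda>\<omega>. g (X 0 \<omega>)" a b
    "expectation (\<lambda>\<omega>. g (X 0 \<omega>))"
  proof unfold_locales
    show "indep_vars (\<lambda>_. borel) (\<lambda>i \<omega>. g (X i \<omega>)) {..<n}"
      by (rule indep_vars_subset[OF indep_vars_compose2[OF X_indep, of "\<lambda>_. g"]]) (use gm in auto)
    show "AE x in P. g (X 0 x) \<in> {a..b}" using Bd by auto
  qed (auto simp: dist gX)
  have E: "expectation (\<lambda>\<omega>. g (X 0 \<omega>)) = \<integral>x. g x \<partial>Q"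
    using integral_distr[OF X_meas[of 0] gm] X_law by simp
  have cn: "card {..<n} = n" by simp
  have ne: "{..<n} \<noteq> {}" using n by (simp add: lessThan_empty_iff)
  have npos: "real n > 0" using n by simp
  define \<mu> where "\<mu> = expectation (\<lambda>\<omega>. g (X 0 \<omega>))"
  show "measure P {\<omega>\<in>space P. (\<Sum>i<n. g (X i \<omega>)) \<le> 0}
           \<le> exp (-2 * real n * (\<integral>x. g x \<partial>Q)\<^sup>2 / (b - a)\<^sup>2)" if pos: "\<integral>x. g x \<partial>Q > 0"
  proof -
    have h: "prob {\<omega>\<in>space P. (\<Sum>i\<in>{..<n}. g (X i \<omega>)) / real (card {..<n}) \<le> \<mu> - \<mu>}
        \<le> exp (-2 * real (card {..<n}) * \<mu>\<^sup>2 / (b - a)\<^sup>2)"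
      unfolding \<mu>_def by (rule H.Hoeffding_ineq_le'[OF _ ab ne]) (use pos E in simp)
    have "{\<omega>\<in>space P. (\<Sum>i<n. g (X i \<omega>)) \<le> 0} =
      {\<omega>\<in>space P. (\<Sum>i\<in>{..<n}. g (X i \<omega>)) / real (card {..<n}) \<le> \<mu> - \<mu>}"
      using npos by (simp add: divide_le_0_iff)
    then show ?thesis using h E unfolding \<mu>_def cn by simp
  qed
  show "measure P {\<omega>\<in>space P. (\<Sum>i<n. g (X i \<omega>)) \<ge> 0}
           \<le> exp (-2 * real n * (\<integral>x. g x \<partial>Q)\<^sup>2 / (b - a)\<^sup>2)" if neg: "\<integral>x. g x \<partial>Q < 0"
  proof -
    have h: "prob {\<omega>\<in>space P. (\<Sum>i\<in>{..<n}. g (X i \<omega>)) / real (card {..<n}) \<ge> \<mu> + (- \<mu>)}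
        \<le> exp (-2 * real (card {..<n}) * (- \<mu>)\<^sup>2 / (b - a)\<^sup>2)"
      unfolding \<mu>_def by (rule H.Hoeffding_ineq_ge'[OF _ ab ne]) (use neg E in simp)
    have "{\<omega>\<in>space P. (\<Sum>i<n. g (X i \<omega>)) \<ge> 0} =
      {\<omega>\<in>space P. (\<Sum>i\<in>{..<n}. g (X i \<omega>)) / real (card {..<n}) \<ge> \<mu> + (- \<mu>)}"
      using npos by (simp add: zero_le_divide_iff)
    then show ?thesis using h E unfolding \<mu>_def cn by simp
  qed
qed

lemma summable_powr_exp:
  fixes r c :: real assumes "c > 0"
  shows "summable (\<lambda>n. real n powr r * exp (- c * real n))"
proof (rule summable_comparison_test_bigo)
  show "summable (\<lambda>n. norm (real n powr (-2)))"
    using summable_real_powr_iff[of "-2"] by simp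
  show "(\<lambda>n. real n powr r * exp (- c * real n)) \<in> O(\<lambda>n. real n powr (-2))"
    using assms by real_asymp
qed
lemma event_incl:
  fixes g :: "nat \<Rightarrow> real \<Rightarrow> real"
  assumes conv: "\<And>i. i < n \<Longrightarrow> convex_on UNIV (g i)" and n: "n \<ge> 1"
    and ymin: "\<And>t. (\<Sum>i<n. g i y) \<le> (\<Sum>i<n. g i t)"
    and eps: "\<epsilon> > 0" and far: "\<bar>y - m\<bar> > \<epsilon>"
  shows "(\<Sum>i<n. Dplus (g i) (m + \<epsilon>)) \<le> 0 \<or> (\<Sum>i<n. Dplus (g i) (m + - \<epsilon>)) \<ge> 0"
proof (cases "y > m + \<epsilon>")
  case True
  have "(\<Sum>i<n. Dplus (g i) (m + \<epsilon>)) \<le> (\<Sum>i<n. (g i y - g i (m + \<epsilon>)) / (y - (m + \<epsilon>)))"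
    by (intro sum_mono Dplus_le_slope conv True) auto
  also have "\<dots> = ((\<Sum>i<n. g i y) - (\<Sum>i<n. g i (m + \<epsilon>))) / (y - (m + \<epsilon>))"
    by (simp add: sum_subtractf flip: sum_divide_distrib)
  also have "\<dots> \<le> 0" using ymin[of "m+\<epsilon>"] True by (intro divide_nonpos_pos) auto
  finally show ?thesis by simp
next
  case False
  then have y: "y < m + - \<epsilon>" using far by auto
  have "0 \<le> ((\<Sum>i<n. g i (m + - \<epsilon>)) - (\<Sum>i<n. g i y)) / ((m + - \<epsilon>) - y)"
    using ymin[of "m + - \<epsilon>"] y by (intro divide_nonneg_pos) auto
  also have "\<dots> = (\<Sum>i<n. (g i (m + - \<epsilon>) - g i y) / ((m + - \<epsilon>) - y))"
    by (simp add: sum_subtractf flip: sum_divide_distrib)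
  also have "\<dots> \<le> (\<Sum>i<n. Dplus (g i) (m + - \<epsilon>))"
    by (intro sum_mono slope_le_Dplus conv y) auto
  finally show ?thesis by simp
qed

lemma last_exit_bound:
  fixes s :: "nat \<Rightarrow> real" and r :: real
  assumes r: "r > 0"
  shows "enat_powr (last_exit s m \<epsilon>) r \<le>
    (\<Sum>n. ennreal (real n powr r) * indicator {k. k \<ge> 1 \<and> \<bar>s k - m\<bar> > \<epsilon>} n)"
    (is "_ \<le> ?R")
proof -
  define S where "S = {k. k \<ge> 1 \<and> \<bar>s k - m\<bar> > \<epsilon>}"
  have le: "ennreal (real k powr r) \<le> ?R" if "k \<in> S" for k
  proof -
    have "ennreal (real k powr r) = (\<Sum>n\<in>{k}. ennreal (real n powr r) * indicator S n)"
      using that by simp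
    also have "\<dots> \<le> ?R" unfolding S_def[symmetric]
      by (rule sum_le_suminf) auto
    finally show ?thesis .
  qed
  have eq: "{enat k | k. k \<ge> 1 \<and> \<bar>s k - m\<bar> > \<epsilon>} = enat ` S"
    unfolding S_def by auto
  show ?thesis
  proof (cases "finite S")
    case True
    show ?thesis
    proof (cases "S = {}")
      case True
      then show ?thesis unfolding last_exit_def eq by (simp add: enat_powr_def zero_enat_def bot_enat_def)
    next
      case False
      then have "Max (enat ` S) \<in> enat ` S" using \<open>finite S\<close> by (intro Max_in) auto
      then obtain k where k: "k \<in> S" "Max (enat ` S) = enat k" by auto
      have "last_exit s m \<epsilon> = enat k"
        unfolding last_exit_def eq Sup_enat_def using False \<open>finite S\<close> k by auto
      then show ?thesis using le[OF k(1)] by (simp add: enat_powr_def)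
    qed
  next
    case False
    have "last_exit s m \<epsilon> = \<infinity>"
      unfolding last_exit_def eq Sup_enat_def using False finite_imageD[of enat S] by (auto simp: inj_on_def)
    moreover have "?R = \<top>"
    proof (rule ccontr)
      assume "?R \<noteq> \<top>"
      then obtain x where x: "?R = ennreal x" "x \<ge> 0" by (cases ?R) auto
      obtain N :: nat where N: "real N > x" using reals_Archimedean2 by blast
      obtain F where F: "F \<subseteq> S" "finite F" "card F = N"
        using infinite_arbitrarily_large[OF False] by blast
      have "ennreal (real N) = (\<Sum>n\<in>F. 1)" using F by (simp add: ennreal_of_nat_eq_real_of_nat)
      also have "\<dots> \<le> (\<Sum>n\<in>F. ennreal (real n powr r) * indicator S n)"
      proof (intro sum_mono)
        fix n assume "n \<in> F"
        then have "n \<in> S" "n \<ge> 1" using F S_def by auto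
        then have "1 \<le> real n powr r" using r by (simp add: ge_one_powr_ge_zero)
        then show "1 \<le> ennreal (real n powr r) * indicator S n" using \<open>n \<in> S\<close>
          by (simp add: ennreal_leI)
      qed
      also have "\<dots> \<le> ?R" unfolding S_def[symmetric] using F by (intro sum_le_suminf) auto
      finally have "ennreal (real N) \<le> ennreal x" using x by simp
      then show False using N x by (simp add: ennreal_le_iff2)
    qed
    ultimately show ?thesis by (simp add: enat_powr_def)
  qed
qed

lemma diff_bounds:
  fixes f :: "real \<Rightarrow> real"
  assumes f: "convex_on UNIV f" and "a < b"
  shows "(b - a) * Dplus f a \<le> f b - f a" "f b - f a \<le> (b - a) * Dplus f b"
proof -
  have "Dplus f a \<le> (f b - f a) / (b - a)" using Dplus_le_slope[OF f assms(2)] .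
  then show "(b - a) * Dplus f a \<le> f b - f a" using assms(2) by (simp add: field_simps)
  have "(f b - f a) / (b - a) \<le> Dplus f b" using slope_le_Dplus[OF f assms(2)] .
  then show "f b - f a \<le> (b - a) * Dplus f b" using assms(2) by (simp add: field_simps)
qed

lemma integrable_hdiff_lt:
  fixes Q :: "'s measure" and h :: "'s \<Rightarrow> real \<Rightarrow> real"
  assumes h_meas: "\<And>t. (\<lambda>x. h x t) \<in> borel_measurable Q"
    and h_conv: "\<And>x. x \<in> space Q \<Longrightarrow> convex_on UNIV (h x)"
    and Dplus_int: "\<And>t. integrable Q (\<lambda>x. Dplus (h x) t)"
    and ab: "a < b"
  shows "integrable Q (\<lambda>x. h x b - h x a)"
proof (rule Bochner_Integration.integrable_bound)
  show "integrable Q (\<lambda>x. (b - a) * (\<bar>Dplus (h x) a\<bar> + \<bar>Dplus (h x) b\<bar>))"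
    using Dplus_int by auto
  show "(\<lambda>x. h x b - h x a) \<in> borel_measurable Q" using h_meas by auto
  show "AE x in Q. norm (h x b - h x a) \<le> norm ((b - a) * (\<bar>Dplus (h x) a\<bar> + \<bar>Dplus (h x) b\<bar>))"
  proof (rule AE_I2)
    fix x assume x: "x \<in> space Q"
    note d = diff_bounds[OF h_conv[OF x] ab]
    have "\<bar>(b - a) * Dplus (h x) a\<bar> = (b - a) * \<bar>Dplus (h x) a\<bar>"
         "\<bar>(b - a) * Dplus (h x) b\<bar> = (b - a) * \<bar>Dplus (h x) b\<bar>"
      using ab by (simp_all add: abs_mult)
    then show "norm (h x b - h x a) \<le> norm ((b - a) * (\<bar>Dplus (h x) a\<bar> + \<bar>Dplus (h x) b\<bar>))"
      using d ab by (simp add: distrib_left)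
  qed
qed

lemma integrable_hdiff:
  fixes Q :: "'s measure" and h :: "'s \<Rightarrow> real \<Rightarrow> real"
  assumes h_meas: "\<And>t. (\<lambda>x. h x t) \<in> borel_measurable Q"
    and h_conv: "\<And>x. x \<in> space Q \<Longrightarrow> convex_on UNIV (h x)"
    and Dplus_int: "\<And>t. integrable Q (\<lambda>x. Dplus (h x) t)"
  shows "integrable Q (\<lambda>x. h x b - h x a)"
proof (cases a b rule: linorder_cases)
  case less then show ?thesis using integrable_hdiff_lt[OF assms less] by simp
next
  case equal then show ?thesis by simp
next
  case greater
  then have "integrable Q (\<lambda>x. - (h x a - h x b))"
    using integrable_hdiff_lt[OF assms greater] by (intro integrable_minus)
  then show ?thesis by simp
qed

lemma Mpop_slopes:
  fixes Q :: "'s measure" and h :: "'s \<Rightarrow> real \<Rightarrow> real"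
  assumes h_meas: "\<And>t. (\<lambda>x. h x t) \<in> borel_measurable Q"
    and h_conv: "\<And>x. x \<in> space Q \<Longrightarrow> convex_on UNIV (h x)"
    and Dplus_int: "\<And>t. integrable Q (\<lambda>x. Dplus (h x) t)"
    and ab: "a < b"
  shows "Mpop Q h t0 b - Mpop Q h t0 a \<le> (b - a) * (\<integral>x. Dplus (h x) b \<partial>Q)"
    and "(b - a) * (\<integral>x. Dplus (h x) a \<partial>Q) \<le> Mpop Q h t0 b - Mpop Q h t0 a"
proof -
  note I = integrable_hdiff[OF h_meas h_conv Dplus_int]
  have eq: "Mpop Q h t0 b - Mpop Q h t0 a = (\<integral>x. h x b - h x a \<partial>Q)"
    unfolding Mpop_def using I[where a=t0 and b=b] I[where a=t0 and b=a]
    by (subst Bochner_Integration.integral_diff[symmetric]) auto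
  show "Mpop Q h t0 b - Mpop Q h t0 a \<le> (b - a) * (\<integral>x. Dplus (h x) b \<partial>Q)"
    unfolding eq
    by (subst integral_mult_right_zero[symmetric], rule integral_mono_AE)
       (use I Dplus_int diff_bounds(2)[OF h_conv ab] in auto)
  show "(b - a) * (\<integral>x. Dplus (h x) a \<partial>Q) \<le> Mpop Q h t0 b - Mpop Q h t0 a"
    unfolding eq
    by (subst integral_mult_right_zero[symmetric], rule integral_mono_AE)
       (use I Dplus_int diff_bounds(1)[OF h_conv ab] in auto)
qed

theorem corollary3:
  fixes Q :: "'s measure" and P :: "'w measure"
    and h :: "'s \<Rightarrow> real \<Rightarrow> real" and t0 m :: real
    and X :: "nat \<Rightarrow> 'w \<Rightarrow> 's" and mhat :: "nat \<Rightarrow> 'w \<Rightarrow> real"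
  assumes Q: "prob_space Q"
    and h_meas: "\<And>t. (\<lambda>x. h x t) \<in> borel_measurable Q"
    and h_conv: "\<And>x. x \<in> space Q \<Longrightarrow> convex_on UNIV (h x)"
    and Dplus_int: "\<And>t. integrable Q (\<lambda>x. Dplus (h x) t)"
    and Dminus_int: "\<And>t. integrable Q (\<lambda>x. Dminus (h x) t)"
    and P: "prob_space P"
    and X_meas: "\<And>i. X i \<in> measurable P Q"
    and X_indep: "prob_space.indep_vars P (\<lambda>_. Q) X UNIV"
    and X_law: "\<And>i. distr P Q (X i) = Q"
    and mhat_min: "\<And>n \<omega>. n \<ge> 1 \<Longrightarrow> \<omega> \<in> space P \<Longrightarrow> smallest_minimizer (Memp h t0 X n \<omega>) (mhat n \<omega>)"
    and mhat_meas: "\<And>n. n \<ge> 1 \<Longrightarrow> mhat n \<in> borel_measurable P"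
    and m_unique: "\<And>t. t \<noteq> m \<Longrightarrow> Mpop Q h t0 m < Mpop Q h t0 t"
    and B: "\<And>x. x \<noteq> 0 \<Longrightarrow> \<exists>a b. a < b \<and>
              (AE \<omega> in P. a \<le> Dplus (h (X 0 \<omega>)) (m + x) \<and> Dplus (h (X 0 \<omega>)) (m + x) \<le> b)"
  shows "\<forall>\<epsilon>>0. \<forall>r>0. (\<integral>\<^sup>+ \<omega>. enat_powr (last_exit (\<lambda>k. mhat k \<omega>) m \<epsilon>) r \<partial>P) < \<infinity>"
proof (intro allI impI)
  fix \<epsilon> r :: real assume eps: "\<epsilon> > 0" and r: "r > 0"
  interpret P: prob_space P by (rule P)
  define gp where "gp = (\<lambda>x. Dplus (h x) (m + \<epsilon>))"
  define gm where "gm = (\<lambda>x. Dplus (h x) (m + - \<epsilon>))"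
  have gp_meas: "gp \<in> borel_measurable Q" unfolding gp_def using Dplus_int by auto
  have gm_meas: "gm \<in> borel_measurable Q" unfolding gm_def using Dplus_int by auto
  have mu_p: "(\<integral>x. gp x \<partial>Q) > 0"
  proof -
    have "Mpop Q h t0 (m + \<epsilon>) - Mpop Q h t0 m \<le> ((m + \<epsilon>) - m) * (\<integral>x. gp x \<partial>Q)"
      unfolding gp_def using eps by (intro Mpop_slopes(1)[OF h_meas h_conv Dplus_int]) auto
    moreover have "Mpop Q h t0 m < Mpop Q h t0 (m + \<epsilon>)" using m_unique eps by auto
    ultimately have "0 < \<epsilon> * (\<integral>x. gp x \<partial>Q)" by simp
    then show ?thesis using eps by (simp add: zero_less_mult_iff)
  qed
  have mu_m: "(\<integral>x. gm x \<partial>Q) < 0"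
  proof -
    have "(m - (m + - \<epsilon>)) * (\<integral>x. gm x \<partial>Q) \<le> Mpop Q h t0 m - Mpop Q h t0 (m + - \<epsilon>)"
      unfolding gm_def using eps by (intro Mpop_slopes(2)[OF h_meas h_conv Dplus_int]) auto
    moreover have "Mpop Q h t0 m < Mpop Q h t0 (m + - \<epsilon>)" using m_unique eps by auto
    ultimately have "\<epsilon> * (\<integral>x. gm x \<partial>Q) < 0" by simp
    then show ?thesis using eps by (simp add: mult_less_0_iff)
  qed
  obtain ap bp where abp: "ap < bp" "AE \<omega> in P. ap \<le> gp (X 0 \<omega>) \<and> gp (X 0 \<omega>) \<le> bp"
    using B[of \<epsilon>] eps unfolding gp_def by auto
  obtain am bm where abm: "am < bm" "AE \<omega> in P. am \<le> gm (X 0 \<omega>) \<and> gm (X 0 \<omega>) \<le> bm"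
    using B[of "- \<epsilon>"] eps unfolding gm_def by auto
  define cp where "cp = 2 * (\<integral>x. gp x \<partial>Q)\<^sup>2 / (bp - ap)\<^sup>2"
  define cm where "cm = 2 * (\<integral>x. gm x \<partial>Q)\<^sup>2 / (bm - am)\<^sup>2"
  have cp: "cp > 0" unfolding cp_def using mu_p abp by auto
  have cm: "cm > 0" unfolding cm_def using mu_m abm by auto
  define A where "A n = {\<omega>\<in>space P. n \<ge> 1 \<and> \<bar>mhat n \<omega> - m\<bar> > \<epsilon>}" for n
  have A_meas: "A n \<in> sets P" for n
  proof (cases "n \<ge> 1")
    case True
    then have "A n = {\<omega>\<in>space P. \<bar>mhat n \<omega> - m\<bar> > \<epsilon>}" unfolding A_def by auto
    then show ?thesis using mhat_meas[OF True] by auto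
  next
    case False
    then have "A n = {}" unfolding A_def by auto
    then show ?thesis by simp
  qed
  have A_bound: "measure P (A n) \<le> exp (- cp * real n) + exp (- cm * real n)" for n
  proof (cases "n \<ge> 1")
    case False
    then have "A n = {}" unfolding A_def by auto
    then show ?thesis by (simp add: add_nonneg_nonneg)
  next
    case True
    define Sp where "Sp = {\<omega>\<in>space P. (\<Sum>i<n. gp (X i \<omega>)) \<le> 0}"
    define Sm where "Sm = {\<omega>\<in>space P. (\<Sum>i<n. gm (X i \<omega>)) \<ge> 0}"
    have gXp: "(\<lambda>\<omega>. gp (X i \<omega>)) \<in> borel_measurable P" for i
      using measurable_comp[OF X_meas gp_meas] by (simp add: comp_def)
    have gXm: "(\<lambda>\<omega>. gm (X i \<omega>)) \<in> borel_measurable P" for i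
      using measurable_comp[OF X_meas gm_meas] by (simp add: comp_def)
    have Sp_meas: "Sp \<in> sets P" unfolding Sp_def using gXp by measurable
    have Sm_meas: "Sm \<in> sets P" unfolding Sm_def using gXm by measurable
    have sub: "A n \<subseteq> Sp \<union> Sm"
    proof
      fix \<omega> assume w: "\<omega> \<in> A n"
      then have ws: "\<omega> \<in> space P" and far: "\<bar>mhat n \<omega> - m\<bar> > \<epsilon>" unfolding A_def by auto
      have sm: "smallest_minimizer (Memp h t0 X n \<omega>) (mhat n \<omega>)" using mhat_min[OF True ws] .
      have conv: "convex_on UNIV (h (X i \<omega>))" for i
        using h_conv measurable_space[OF X_meas ws] by blast
      have ymin: "(\<Sum>i<n. h (X i \<omega>) (mhat n \<omega>)) \<le> (\<Sum>i<n. h (X i \<omega>) t)" for t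
      proof -
        have "Memp h t0 X n \<omega> (mhat n \<omega>) \<le> Memp h t0 X n \<omega> t"
          using sm unfolding smallest_minimizer_def by blast
        then have "(\<Sum>i<n. h (X i \<omega>) (mhat n \<omega>) - h (X i \<omega>) t0) \<le> (\<Sum>i<n. h (X i \<omega>) t - h (X i \<omega>) t0)"
          unfolding Memp_def using True by (simp add: divide_right_mono_neg divide_le_cancel)
        then show ?thesis by (simp add: sum_subtractf)
      qed
      have "(\<Sum>i<n. Dplus (h (X i \<omega>)) (m + \<epsilon>)) \<le> 0 \<or> (\<Sum>i<n. Dplus (h (X i \<omega>)) (m + - \<epsilon>)) \<ge> 0"
        by (rule event_incl[where g="\<lambda>i. h (X i \<omega>)", OF conv True ymin eps far])
      then show "\<omega> \<in> Sp \<union> Sm" unfolding Sp_def Sm_def gp_def gm_def using ws by auto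
    qed
    have "measure P (A n) \<le> measure P (Sp \<union> Sm)"
      using sub Sp_meas Sm_meas by (intro P.finite_measure_mono) auto
    also have "\<dots> \<le> measure P Sp + measure P Sm"
      using Sp_meas Sm_meas by (rule measure_Un_le)
    also have "measure P Sp \<le> exp (- cp * real n)"
    proof -
      have "measure P Sp \<le> exp (-2 * real n * (\<integral>x. gp x \<partial>Q)\<^sup>2 / (bp - ap)\<^sup>2)"
        unfolding Sp_def
        by (rule hoeff_bound(1)[OF P X_meas X_indep X_law gp_meas abp(2) abp(1) True mu_p])
      also have "-2 * real n * (\<integral>x. gp x \<partial>Q)\<^sup>2 / (bp - ap)\<^sup>2 = - cp * real n"
        unfolding cp_def by (simp add: field_simps)
      finally show ?thesis .
    qed
    also have "measure P Sm \<le> exp (- cm * real n)"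
    proof -
      have "measure P Sm \<le> exp (-2 * real n * (\<integral>x. gm x \<partial>Q)\<^sup>2 / (bm - am)\<^sup>2)"
        unfolding Sm_def
        by (rule hoeff_bound(2)[OF P X_meas X_indep X_law gm_meas abm(2) abm(1) True mu_m])
      also have "-2 * real n * (\<integral>x. gm x \<partial>Q)\<^sup>2 / (bm - am)\<^sup>2 = - cm * real n"
        unfolding cm_def by (simp add: field_simps)
      finally show ?thesis .
    qed
    finally show ?thesis by simp
  qed
  define u where "u n = real n powr r * (exp (- cp * real n) + exp (- cm * real n))" for n
  have u_nn: "u n \<ge> 0" for n unfolding u_def by simp
  have u_sum: "summable u"
    unfolding u_def distrib_left
    by (intro summable_add summable_powr_exp cp cm)
  have "(\<integral>\<^sup>+ \<omega>. enat_powr (last_exit (\<lambda>k. mhat k \<omega>) m \<epsilon>) r \<partial>P)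
      \<le> (\<integral>\<^sup>+ \<omega>. (\<Sum>n. ennreal (real n powr r) * indicator (A n) \<omega>) \<partial>P)"
  proof (rule nn_integral_mono)
    fix \<omega> assume ws: "\<omega> \<in> space P"
    have "indicator {k. k \<ge> 1 \<and> \<bar>mhat k \<omega> - m\<bar> > \<epsilon>} n = (indicator (A n) \<omega> :: ennreal)" for n
      unfolding A_def using ws by (simp add: indicator_def)
    then show "enat_powr (last_exit (\<lambda>k. mhat k \<omega>) m \<epsilon>) r
      \<le> (\<Sum>n. ennreal (real n powr r) * indicator (A n) \<omega>)"
      using last_exit_bound[OF r, of "\<lambda>k. mhat k \<omega>" m \<epsilon>] by simp
  qed
  also have "\<dots> = (\<Sum>n. \<integral>\<^sup>+ \<omega>. ennreal (real n powr r) * indicator (A n) \<omega> \<partial>P)"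
    by (rule nn_integral_suminf) (use A_meas in auto)
  also have "\<dots> = (\<Sum>n. ennreal (real n powr r) * emeasure P (A n))"
    using A_meas by (simp add: nn_integral_cmult_indicator)
  also have "\<dots> \<le> (\<Sum>n. ennreal (u n))"
  proof (rule suminf_le)
    fix n
    have "ennreal (real n powr r) * emeasure P (A n) = ennreal (real n powr r * measure P (A n))"
      by (simp add: P.emeasure_eq_measure ennreal_mult)
    also have "\<dots> \<le> ennreal (u n)"
      unfolding u_def by (intro ennreal_leI mult_left_mono A_bound) simp
    finally show "ennreal (real n powr r) * emeasure P (A n) \<le> ennreal (u n)" .
  qed auto
  also have "\<dots> = ennreal (\<Sum>n. u n)"
    using u_sum u_nn by (simp add: suminf_ennreal2)
  also have "\<dots> < \<infinity>" by simp
  finally show "(\<integral>\<^sup>+ \<omega>. enat_powr (last_exit (\<lambda>k. mhat k \<omega>) m \<epsilon>) r \<partial>P) < \<infinity>" .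
qed

end
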